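(* Let $\lambda\in\mathbf{C}$ with $\lambda\neq1$ and let $r\in\mathbf{Z}_{+}$. For every $n\in\mathbf{Z}_{+}$ (nonnegative integers), \[ H_{n}(x\vert\lambda)=\frac{1}{(1-\lambda)^{r}}\sum_{k=0}^{n}\binom{n}{k}\Bigl(\sum_{j=0}^{r}\binom{r}{j}(-\lambda)^{r-j}H_{n-k}(j\vert\lambda)\Bigr)H_{k}^{(r)}(x\vert\lambda). \]
   Context: For $\lambda\in\mathbf{C}$, $\lambda\neq1$, the Frobenius–Euler polynomials are defined by $\frac{1-\lambda}{e^{t}-\lambda}e^{xt}=\sum_{n=0}^{\infty}H_{n}(x\vert\lambda)\frac{t^{n}}{n!}$, and for $r\in\mathbf{Z}_{+}$ the Frobenius–Euler polynomials of order $r$ are defined by $\left(\frac{1-\lambda}{e^{t}-\lambda}\right)^{r}e^{xt}=\sum_{n=0}^{\infty}H_{n}^{(r)}(x\vert\lambda)\frac{t^{n}}{n!}$. $H_{n-k}(j\vert\lambda)$ is $H_{n-k}(x\vert\lambda)$ evaluated at $x=j$. *)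

theory Defs
  imports Complex_Main "HOL-Computational_Algebra.Formal_Power_Series"
begin

text \<open>Frobenius-Euler polynomials of order r, via the generating function
  ((1 - lambda)/(e^t - lambda))^r e^(x t) = sum_n H_n^(r)(x|lambda) t^n/n!,
  read as an identity of formal power series in t over the complex numbers.\<close>

definition FE_gen :: "nat \<Rightarrow> complex \<Rightarrow> complex \<Rightarrow> complex fps" where
  "FE_gen r lam x = (fps_const (1 - lam) / (fps_exp 1 - fps_const lam)) ^ r * fps_exp x"

definition FEH_ord :: "nat \<Rightarrow> nat \<Rightarrow> complex \<Rightarrow> complex \<Rightarrow> complex" where
  "FEH_ord r n x lam = fact n * fps_nth (FE_gen r lam x) n"

definition FEH :: "nat \<Rightarrow> complex \<Rightarrow> complex \<Rightarrow> complex" where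
  "FEH n x lam = FEH_ord 1 n x lam"

end

theory Submission
  imports Defs
begin

unbundle fps_syntax

theorem theorem6:
  fixes lam x :: complex and r n :: nat
  assumes "lam \<noteq> 1"
  shows "FEH n x lam = 1 / (1 - lam) ^ r *
    (\<Sum>k=0..n. of_nat (n choose k) *
       (\<Sum>j=0..r. of_nat (r choose j) * (- lam) ^ (r - j) * FEH (n - k) (of_nat j) lam)
       * FEH_ord r k x lam)"
proof -
  define c where "c = 1 - lam"
  define D where "D = fps_exp (1::complex) - fps_const lam"
  define A where "A = fps_const c / D"
  have c0: "c \<noteq> 0" using assms by (simp add: c_def)
  have D0: "D $ 0 \<noteq> 0" using c0 by (simp add: D_def c_def)
  have AD: "A * D = fps_const c"
    using D0 by (simp add: A_def fps_divide_unit inverse_mult_eq_1)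
  have FEHj: "FEH m (of_nat j) lam = fact m * (A * fps_exp 1 ^ j) $ m" for m j
    by (simp add: FEH_def FEH_ord_def FE_gen_def A_def D_def c_def fps_exp_power_mult)
  define F where "F = A * D ^ r"
  define G where "G = A ^ r * fps_exp x"
  have key: "(A * (of_nat c' * fps_exp 1 ^ k * fps_const a)) $ m
      = of_nat c' * a * (A * fps_exp 1 ^ k) $ m" for a k m c'
  proof -
    have "A * (of_nat c' * fps_exp 1 ^ k * fps_const a) = fps_const (of_nat c' * a) * (A * fps_exp 1 ^ k)"
      by (simp only: fps_of_nat[symmetric] fps_const_mult[symmetric] mult_ac)
    thus ?thesis by (simp only: fps_mult_left_const_nth)
  qed
  have inner: "(\<Sum>j=0..r. of_nat (r choose j) * (- lam) ^ (r - j) * FEH m (of_nat j) lam)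
       = fact m * F $ m" for m
  proof -
    have "D = fps_exp 1 + fps_const (-lam)" by (simp add: D_def)
    hence "D ^ r = (\<Sum>j=0..r. of_nat (r choose j) * fps_exp 1 ^ j * fps_const (-lam) ^ (r - j))"
      by (simp add: binomial_ring atLeast0AtMost)
    hence "F $ m = (\<Sum>j=0..r. of_nat (r choose j) * (- lam) ^ (r - j) * (A * fps_exp 1 ^ j) $ m)"
      unfolding F_def
      by (simp add: sum_distrib_left fps_sum_nth key)
    thus ?thesis by (simp add: FEHj sum_distrib_left mult_ac)
  qed
  have ordk: "FEH_ord r k x lam = fact k * G $ k" for k
    by (simp add: FEH_ord_def FE_gen_def G_def A_def D_def c_def)
  have "(\<Sum>k=0..n. of_nat (n choose k) *
       (\<Sum>j=0..r. of_nat (r choose j) * (- lam) ^ (r - j) * FEH (n - k) (of_nat j) lam)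
       * FEH_ord r k x lam) = (\<Sum>k=0..n. fact n * (G $ k * F $ (n - k)))"
  proof (rule sum.cong[OF refl])
    fix k assume "k \<in> {0..n}"
    hence kn: "k \<le> n" by simp
    have "(of_nat (n choose k) :: complex) = fact n / (fact k * fact (n - k))"
      using kn by (simp add: binomial_fact)
    thus "of_nat (n choose k) *
       (\<Sum>j=0..r. of_nat (r choose j) * (- lam) ^ (r - j) * FEH (n - k) (of_nat j) lam)
       * FEH_ord r k x lam = fact n * (G $ k * F $ (n - k))"
      unfolding inner ordk by (simp add: field_simps)
  qed
  also have "\<dots> = fact n * (G * F) $ n"
    by (simp add: fps_mult_nth sum_distrib_left)
  also have "G * F = fps_const c ^ r * (A * fps_exp x)"
    unfolding G_def F_def AD[symmetric] by (simp add: power_mult_distrib mult_ac)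
  finally have "(\<Sum>k=0..n. of_nat (n choose k) *
       (\<Sum>j=0..r. of_nat (r choose j) * (- lam) ^ (r - j) * FEH (n - k) (of_nat j) lam)
       * FEH_ord r k x lam) = fact n * c ^ r * (A * fps_exp x) $ n"
    by (simp add: fps_mult_left_const_nth)
  moreover have "FEH n x lam = fact n * (A * fps_exp x) $ n"
    by (simp add: FEH_def FEH_ord_def FE_gen_def A_def D_def c_def)
  ultimately show ?thesis using c0 by (simp add: c_def field_simps)
qed

end
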